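(* Let $(X_1,X_2)$ be an extensible pair and let $\gamma\in\mathcal H_2$ with $|\gamma|_{(X_1,X_2)}=0$; put $l=\mathrm{ls}(\gamma)$, $r=\mathrm{rs}(\gamma)$. Then there exist integers $b_i$ ($1\le i\le l-1$), $c_i$ ($1\le i\le r-1$) and $s$ such that for all $k\ge l+r-d_1-d_2$, $$\gamma^{(k)}=\sum_{p\in Z_k,\ i(p)\le l-1}b_{i(p)}\alpha_p+\sum_{p\in Z_k,\ i(p)\ge l,\ \bar\imath(p)\ge r}s\,\alpha_p+\sum_{p\in Z_k,\ \bar\imath(p)\le r-1}c_{\bar\imath(p)}\alpha_p.$$
   Context: Marked Dynkin diagram $(X,\xi)$: Dynkin diagram of a symmetrizable generalized Cartan matrix $C(X)$ with distinguished node $\xi$; $\det X=\det C(X)$; $X(-1)$ is $X$ minus $\xi$ ($\det\emptyset=1$); $\Delta_X=\det X-\det X(-1)$. $(X_1,X_2)$ is an extensible pair if $\det X_i\ne0$, $\Delta_i:=\Delta_{X_i}\ne0$, $\gcd(\det X_i,\Delta_i)=1$ ($i=1,2$), $\gcd(\Delta_1,\Delta_2)=1$. $Z_k$ is obtained from the disjoint union of $X_1$, a path $A_k$ (nodes $1,\dots,k$) and $X_2$ by adding simple edges $\xi_1$—$1$ and $k$—$\xi_2$; $\omega_p,\alpha_p$ are fundamental weights and simple roots of $\mathfrak g(Z_k)$. Numberings: if $X$ has $d$ nodes, a numbering is a bijection $\epsilon:N(X)\to\{1,\dots,d\}$ with $\epsilon(\xi)=d$. $X(m)$ ($m\ge0$)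 is $X$ with a path of $m$ new nodes $\xi-1-\cdots-m$ attached at $\xi$, numbered by $j(p)=\epsilon(p)$ on $X$ and $j=d+t$ on the $t$-th new node; $\bar\omega^{(m)}$ is the fundamental weight of $\mathfrak g(X(m))$ at the node with $j=d+m$. For extensible $X$ ($\det X\ne0$, $\Delta_X\ne0$, $\gcd(\det X,\Delta_X)=1$) there is (by earlier work of Kleber and the author) a unique integer sequence $(a_i)_{i\ge1}$ with $-\Delta_X\omega_p-a_{j(p)}\bar\omega^{(m)}\in Q(X(m))$ for all $m\ge0$ with $\det X(m)\ne0$ and all $p\in X(m)$. Fix numberings $\epsilon_1,\epsilon_2$ of $X_1,X_2$ ($d_i$ nodes) with sequences $(a_i^{(1)}),(a_i^{(2)})$. On $Z_k$: $i(p)=\epsilon_1(p)$ on $X_1$, $i=d_1+t$ on the $t$-th node of $A_k$, $i(p)=d_1+d_2+k+1-\epsilon_2(p)$ on $X_2$; $\bar\imath(p)=\epsilon_2(p)$ on $X_2$, $\bar\imath=d_2+k+1-t$ on the $t$-th node of $A_k$, $\bar\imath(p)=d_1+d_2+k+1-\epsilon_1(p)$ on $X_1$. $\mathcal H_1$: finitely supported integer sequences $x=(x_1,x_2,\dots)$, $\ell(x)=\max\{i:x_i\ne0\}$; $\mathcal H_2=\mathcal H_1\times\mathcal H_1$. For $\gamma=(x,y)$: $\mathrm{ls}(\gamma)=\max(\ell(x),d_1)$, $\mathrm{rs}(\gamma)=\max(\ell(y),d_2)$, $\ell(\gamma)=\mathrm{ls}+\mathrm{rs}$, and for $k\ge\ell(\gamma)-d_1-d_2$,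 $\gamma^{(k)}=\sum_{p\in Z_k}(x_{i(p)}+y_{\bar\imath(p)})\omega_p$. Number of boxes: $|\gamma|_{(X_1,X_2)}=\Delta_2\sum_ix_ia_i^{(1)}-\Delta_1\sum_iy_ia_i^{(2)}$. *)

theory Defs
  imports Main "Jordan_Normal_Form.Determinant"
begin

(* Nodes of a diagram with d nodes are identified with 1..d via the numbering;
   the distinguished (marked) node xi is node d. *)
type_synonym gcm = "nat \<Rightarrow> nat \<Rightarrow> int"

definition sym_gcm :: "nat \<Rightarrow> gcm \<Rightarrow> bool" where
  "sym_gcm d C \<longleftrightarrow>
     (\<forall>i\<in>{1..d}. C i i = 2) \<and>
     (\<forall>i\<in>{1..d}. \<forall>j\<in>{1..d}. i \<noteq> j \<longrightarrow> C i j \<le> 0 \<and> (C i j = 0 \<longleftrightarrow> C j i = 0)) \<and>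
     (\<exists>e::nat \<Rightarrow> rat. (\<forall>i\<in>{1..d}. e i > 0) \<and>
        (\<forall>i\<in>{1..d}. \<forall>j\<in>{1..d}. e i * of_int (C i j) = e j * of_int (C j i)))"

definition marked_diagram :: "nat \<Rightarrow> gcm \<Rightarrow> bool" where
  "marked_diagram d C \<longleftrightarrow> d \<ge> 1 \<and> sym_gcm d C"

(* determinant of the Cartan matrix restricted to nodes 1..n (det of empty = 1) *)
definition cdet :: "nat \<Rightarrow> gcm \<Rightarrow> int" where
  "cdet n C = det (mat n n (\<lambda>(i, j). C (i + 1) (j + 1)))"

(* Delta_X = det X - det X(-1), X(-1) = X minus the marked node d *)
definition Delta :: "nat \<Rightarrow> gcm \<Rightarrow> int" where
  "Delta d C = cdet d C - cdet (d - 1) C"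

definition extensible :: "nat \<Rightarrow> gcm \<Rightarrow> bool" where
  "extensible d C \<longleftrightarrow> cdet d C \<noteq> 0 \<and> Delta d C \<noteq> 0 \<and> gcd (cdet d C) (Delta d C) = 1"

(* X(m): path of m new nodes d+1,...,d+m attached at the marked node d *)
definition ext_mat :: "nat \<Rightarrow> gcm \<Rightarrow> nat \<Rightarrow> gcm" where
  "ext_mat d C m = (\<lambda>i j. if i \<le> d \<and> j \<le> d then C i j
      else if i = j then 2
      else if (i + 1 = j \<or> j + 1 = i) \<and> d \<le> min i j then -1 else 0)"

(* Weights are integer coordinate vectors w.r.t. fundamental weights (w q = coefficient of omega_q);
   the simple root alpha_p is sum_q C q p omega_q. Membership in the root lattice Q: *)
definition in_root_lattice :: "nat \<Rightarrow> gcm \<Rightarrow> (nat \<Rightarrow> int) \<Rightarrow> bool" where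
  "in_root_lattice n C w \<longleftrightarrow> (\<exists>z::nat \<Rightarrow> int. \<forall>q\<in>{1..n}. w q = (\<Sum>p=1..n. C q p * z p))"

definition is_a_seq :: "nat \<Rightarrow> gcm \<Rightarrow> (nat \<Rightarrow> int) \<Rightarrow> bool" where
  "is_a_seq d C a \<longleftrightarrow>
     (\<forall>m. cdet (d + m) (ext_mat d C m) \<noteq> 0 \<longrightarrow>
        (\<forall>p\<in>{1..d+m}. in_root_lattice (d + m) (ext_mat d C m)
           (\<lambda>q. - Delta d C * (if q = p then 1 else 0) - a p * (if q = d + m then 1 else 0))))"

(* Z_k, nodes numbered by i : 1..d1+d2+k; X_2 node with numbering e corresponds to i = n+1-e *)
definition Z_mat :: "nat \<Rightarrow> gcm \<Rightarrow> nat \<Rightarrow> gcm \<Rightarrow> nat \<Rightarrow> gcm" where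
  "Z_mat d1 C1 d2 C2 k = (\<lambda>i j.
     let n = d1 + d2 + k in
     if i \<le> d1 \<and> j \<le> d1 then C1 i j
     else if d1 + k < i \<and> d1 + k < j then C2 (n + 1 - i) (n + 1 - j)
     else if i = j then 2
     else if i + 1 = j \<or> j + 1 = i then -1 else 0)"

(* H_1: finitely supported integer sequences x_1, x_2, ... (x 0 unused, set to 0) *)
definition H1 :: "(nat \<Rightarrow> int) \<Rightarrow> bool" where
  "H1 x \<longleftrightarrow> finite {i. x i \<noteq> 0} \<and> x 0 = 0"

definition ell :: "(nat \<Rightarrow> int) \<Rightarrow> nat" where
  "ell x = Max (insert 0 {i. x i \<noteq> 0})"

definition boxes :: "nat \<Rightarrow> gcm \<Rightarrow> (nat \<Rightarrow> int) \<Rightarrow> nat \<Rightarrow> gcm \<Rightarrow> (nat \<Rightarrow> int)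
     \<Rightarrow> (nat \<Rightarrow> int) \<Rightarrow> (nat \<Rightarrow> int) \<Rightarrow> int" where
  "boxes d1 C1 a1 d2 C2 a2 x y =
     Delta d2 C2 * (\<Sum>i=1..ell x. x i * a1 i) - Delta d1 C1 * (\<Sum>i=1..ell y. y i * a2 i)"

(* gamma^(k) as coordinates w.r.t. fundamental weights, indexed by i(p) in 1..n;
   ibar(p) = n+1-i(p) *)
definition gamma_k :: "nat \<Rightarrow> nat \<Rightarrow> nat \<Rightarrow> (nat \<Rightarrow> int) \<Rightarrow> (nat \<Rightarrow> int) \<Rightarrow> nat \<Rightarrow> int" where
  "gamma_k d1 d2 k x y = (\<lambda>q. x q + y (d1 + d2 + k + 1 - q))"

end

theory Submission
  imports Defs
begin

definition MM :: "nat \<Rightarrow> gcm \<Rightarrow> int mat" where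
  "MM n F = mat n n (\<lambda>(i,j). F (Suc i) (Suc j))"

lemma cdet_MM: "cdet n F = det (MM n F)"
  by (simp add: cdet_def MM_def)

lemma MM_carrier[simp]: "MM n F \<in> carrier_mat n n"
  by (simp add: MM_def)

lemma del_last: "mat_delete (MM (Suc n) F) n n = MM n F"
  by (rule eq_matI) (auto simp: mat_delete_def MM_def)

lemma det_last_entry:
  "det (MM (Suc k) (\<lambda>i j. if i = Suc k \<and> j = Suc k then F i j + t else F i j))
     = det (MM (Suc k) F) + t * det (MM k F)"
proof -
  let ?F' = "\<lambda>i j. if i = Suc k \<and> j = Suc k then F i j + t else F i j"
  let ?A = "MM (Suc k) F" and ?B = "MM (Suc k) ?F'"
  have cof: "cofactor ?B k j = cofactor ?A k j" for j
    unfolding cofactor_def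
    by (rule arg_cong[where f="\<lambda>M. _ * det M"], rule eq_matI) (auto simp: mat_delete_def MM_def)
  have ent: "?B $$ (k, j) = ?A $$ (k, j) + (if j = k then t else 0)" if "j < Suc k" for j
    using that by (auto simp: MM_def)
  have "det ?B = (\<Sum>j<Suc k. ?B $$ (k,j) * cofactor ?B k j)"
    by (rule laplace_expansion_row) auto
  also have "\<dots> = (\<Sum>j<Suc k. ?A $$ (k,j) * cofactor ?A k j) + (\<Sum>j<Suc k. (if j = k then t else 0) * cofactor ?A k j)"
    by (simp add: cof ent distrib_right sum.distrib)
  also have "(\<Sum>j<Suc k. ?A $$ (k,j) * cofactor ?A k j) = det ?A"
    by (rule laplace_expansion_row[symmetric]) auto
  also have "(\<Sum>j<Suc k. (if j = k then t else 0) * cofactor ?A k j) = t * cofactor ?A k k"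
    by (simp add: if_distrib sum.delta)
  also have "cofactor ?A k k = det (MM k F)"
    by (simp add: cofactor_def del_last)
  finally show ?thesis .
qed

abbreviation "EE d C \<equiv> ext_mat d C 0"

lemma ext_mat_m: "ext_mat d C m = ext_mat d C 0"
  by (simp add: ext_mat_def)

definition Tm :: "nat \<Rightarrow> gcm \<Rightarrow> gcm" where
  "Tm n F = (\<lambda>i j. if i = n \<and> j = n then F i j + -1 else F i j)"

lemma T_step:
  assumes "d \<le> n" "1 \<le> n"
  shows "det (MM (Suc n) (Tm (Suc n) (EE d C))) = det (MM n (Tm n (EE d C)))"
proof -
  let ?A = "MM (Suc n) (Tm (Suc n) (EE d C))"
  let ?B = "addcol 1 (n-1) n ?A"
  have "det ?B = det ?A"
    by (rule det_addcol) (use assms in auto)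
  have Bc: "?B \<in> carrier_mat (Suc n) (Suc n)" by (simp add: mat_addcol_def MM_def)
  have row: "?B $$ (n, j) = (if j = n then 1 else 0)" if "j < Suc n" for j
    using that assms by (auto simp: mat_addcol_def MM_def Tm_def ext_mat_def)
  have "det ?B = (\<Sum>j<Suc n. ?B $$ (n,j) * cofactor ?B n j)"
    by (rule laplace_expansion_row[OF Bc]) auto
  also have "\<dots> = (\<Sum>j<Suc n. (if j = n then cofactor ?B n n else 0))"
    by (rule sum.cong[OF refl]) (use row in simp)
  also have "\<dots> = cofactor ?B n n"
    by simp
  also have "\<dots> = det (mat_delete ?B n n)" by (simp add: cofactor_def)
  also have "mat_delete ?B n n = MM n (Tm n (EE d C))"
    by (rule eq_matI) (use assms in \<open>auto simp: mat_delete_def mat_addcol_def MM_def Tm_def ext_mat_def\<close>)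
  finally show ?thesis using \<open>det ?B = det ?A\<close> by simp
qed

lemma MM_small: "n \<le> d \<Longrightarrow> MM n (EE d C) = MM n C"
  by (rule eq_matI) (auto simp: MM_def ext_mat_def)

lemma T_eq: "det (MM (Suc k) (Tm (Suc k) F)) = det (MM (Suc k) F) - det (MM k F)"
  using det_last_entry[of k F "-1"] by (simp add: Tm_def)

lemma T_base:
  assumes "1 \<le> d"
  shows "det (MM d (Tm d (EE d C))) = Delta d C"
proof -
  obtain k where d: "d = Suc k" using assms by (cases d) auto
  show ?thesis using T_eq[of k "EE d C"] MM_small[of d d C] MM_small[of k d C]
    by (simp add: d Delta_def cdet_MM)
qed

lemma T_all:
  assumes "1 \<le> d" "d \<le> n"
  shows "det (MM n (Tm n (EE d C))) = Delta d C"
  using assms(2)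
proof (induction n rule: dec_induct)
  case base thus ?case using T_base[OF assms(1)] by simp
next
  case (step n) thus ?case using T_step[of d n C] assms by simp
qed

lemma cdet_formula:
  assumes "1 \<le> d"
  shows "det (MM (d+m) (EE d C)) = cdet d C + int m * Delta d C"
proof (induction m)
  case 0 thus ?case using MM_small[of d d C] by (simp add: cdet_MM)
next
  case (Suc m)
  have "det (MM (Suc (d+m)) (EE d C)) = det (MM (d+m) (EE d C)) + Delta d C"
    using T_eq[of "d+m" "EE d C"] T_all[OF assms, of "Suc (d+m)" C] by simp
  thus ?case using Suc by (simp add: algebra_simps)
qed

lemma sum_shift1: "(\<Sum>p=1..n. f p) = (\<Sum>i<n. f (Suc i))"
  by (induct n) auto

lemma sum_shift1': "(\<Sum>p=Suc 0..n. f p) = (\<Sum>i<n. f (Suc i))"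
  by (induct n) auto

lemma smv: "v \<in> carrier_vec n \<Longrightarrow> (a \<cdot>\<^sub>m 1\<^sub>m n) *\<^sub>v v = (a::int) \<cdot>\<^sub>v v"
  by (rule eq_vecI) (auto simp: row_smult)

lemma MMv:
  assumes "j < n"
  shows "(MM n F *\<^sub>v vec n (\<lambda>i. v (Suc i))) $ j = (\<Sum>p=1..n. F (Suc j) p * v p)"
  using assms by (simp add: MM_def scalar_prod_def sum_shift1 sum_shift1' atLeast0LessThan)

lemma adj_sol:
  assumes h: "\<forall>q\<in>{1..n}. (\<Sum>p=1..n. F q p * v p) = y q" and p: "p \<in> {1..n}"
  shows "det (MM n F) * v p = (\<Sum>q=1..n. adj_mat (MM n F) $$ (p-1, q-1) * y q)"
proof -
  let ?A = "MM n F" and ?V = "vec n (\<lambda>i. v (Suc i))" and ?Y = "vec n (\<lambda>i. y (Suc i))"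
  have AV: "?A *\<^sub>v ?V = ?Y"
  proof (rule eq_vecI)
    fix j assume "j < dim_vec ?Y"
    hence j: "j < n" by simp
    show "(?A *\<^sub>v ?V) $ j = ?Y $ j" using MMv[OF j] h j by simp
  qed (simp add: MM_def)
  have ad: "adj_mat ?A \<in> carrier_mat n n" "adj_mat ?A * ?A = det ?A \<cdot>\<^sub>m 1\<^sub>m n"
    using adj_mat[OF MM_carrier] by auto
  have "adj_mat ?A *\<^sub>v ?Y = (adj_mat ?A * ?A) *\<^sub>v ?V"
    by (simp add: AV[symmetric] assoc_mult_mat_vec[OF ad(1) MM_carrier] )
  also have "\<dots> = det ?A \<cdot>\<^sub>v ?V" using ad(2) smv by simp
  finally have eq: "(adj_mat ?A *\<^sub>v ?Y) $ (p-1) = (det ?A \<cdot>\<^sub>v ?V) $ (p-1)" by simp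
  have pp: "p - 1 < n" "Suc (p-1) = p" using p by auto
  have "(det ?A \<cdot>\<^sub>v ?V) $ (p-1) = det ?A * v p" using pp by simp
  moreover have "(adj_mat ?A *\<^sub>v ?Y) $ (p-1) = (\<Sum>q=1..n. adj_mat ?A $$ (p-1, q-1) * y q)"
    using pp ad(1) by (simp add: scalar_prod_def sum_shift1 sum_shift1' atLeast0LessThan)
  ultimately show ?thesis using eq by simp
qed

lemma adj_exists: "\<exists>v. \<forall>q\<in>{1..n}. (\<Sum>p=1..n. F q p * v p) = det (MM n F) * y q"
proof -
  let ?A = "MM n F" and ?Y = "vec n (\<lambda>i. y (Suc i))"
  have ad: "adj_mat ?A \<in> carrier_mat n n" "?A * adj_mat ?A = det ?A \<cdot>\<^sub>m 1\<^sub>m n"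
    using adj_mat[OF MM_carrier] by auto
  define V where "V = adj_mat ?A *\<^sub>v ?Y"
  have V: "V \<in> carrier_vec n" using ad(1) by (simp add: V_def)
  have VV: "V = vec n (\<lambda>i. V $ i)" using V by auto
  have "?A *\<^sub>v V = (?A * adj_mat ?A) *\<^sub>v ?Y"
    unfolding V_def by (rule assoc_mult_mat_vec[symmetric, OF MM_carrier ad(1)]) simp
  also have "\<dots> = det ?A \<cdot>\<^sub>v ?Y" using ad(2) smv by simp
  finally have eq: "?A *\<^sub>v V = det ?A \<cdot>\<^sub>v ?Y" .
  show ?thesis
  proof (intro exI ballI)
    fix q assume q: "q \<in> {1..n}"
    have qq: "q - 1 < n" "Suc (q-1) = q" using q by auto
    have "(?A *\<^sub>v vec n (\<lambda>i. (\<lambda>p. V $ (p - 1)) (Suc i))) $ (q-1) = (det ?A \<cdot>\<^sub>v ?Y) $ (q-1)"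
      using eq VV by simp
    thus "(\<Sum>p=1..n. F q p * V $ (p - 1)) = det ?A * y q"
      using MMv[of "q-1" n F "\<lambda>p. V $ (p - 1)"] qq by simp
  qed
qed

lemma adj_diag:
  assumes "1 \<le> n"
  shows "adj_mat (MM n F) $$ (n-1, n-1) = det (MM (n-1) F)"
proof -
  obtain k where n: "n = Suc k" using assms by (cases n) auto
  show ?thesis using del_last[of k F] by (simp add: n adj_mat_def cofactor_def MM_def)
qed

lemma E_path:
  assumes "d < q"
  shows "EE d C q p = (if p = q then 2 else if p = q - 1 \<or> p = q + 1 then -1 else 0)"
  using assms by (auto simp: ext_mat_def)

lemma E_far:
  assumes "d \<le> K" "q \<le> K" "K + 2 \<le> p"
  shows "EE d C q p = 0"
  using assms by (auto simp: ext_mat_def)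

lemma x_zero:
  assumes "H1 x" "ell x < q"
  shows "x q = 0"
proof (rule ccontr)
  assume "x q \<noteq> 0"
  hence "q \<in> insert 0 {i. x i \<noteq> 0}" by simp
  moreover have "finite (insert 0 {i. x i \<noteq> 0})" using assms(1) by (simp add: H1_def)
  ultimately have "q \<le> ell x" unfolding ell_def by (rule Max_ge[rotated])
  thus False using assms(2) by simp
qed

lemma path_sum:
  assumes "1 \<le> d" "d < q" "q + 1 \<le> N"
  shows "(\<Sum>p=1..N. EE d C q p * v p) = 2 * v q - v (q-1) - v (q+1)"
proof -
  have "(\<Sum>p=1..N. EE d C q p * v p) = (\<Sum>p=1..N. (if p = q then 2 * v q else 0)
       + (if p = q - 1 then - v (q-1) else 0) + (if p = q + 1 then - v (q+1) else 0))"
    by (rule sum.cong[OF refl]) (use assms in \<open>auto simp: E_path\<close>)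
  also have "\<dots> = 2 * v q - v (q-1) - v (q+1)"
    using assms by (simp add: sum.distrib) linarith
  finally show ?thesis .
qed

lemma path_sum_last:
  assumes "1 \<le> d" "d < q" "q = N"
  shows "(\<Sum>p=1..N. EE d C q p * v p) = 2 * v q - v (q-1)"
proof -
  have "(\<Sum>p=1..N. EE d C q p * v p) = (\<Sum>p=1..N. (if p = q then 2 * v q else 0)
       + (if p = q - 1 then - v (q-1) else 0))"
    by (rule sum.cong[OF refl]) (use assms in \<open>auto simp: E_path\<close>)
  also have "\<dots> = 2 * v q - v (q-1)"
    using assms by (simp add: sum.distrib)
  finally show ?thesis .
qed

lemma trunc:
  assumes "d \<le> K" "q \<le> K" "K + 1 \<le> N"
  shows "(\<Sum>p=1..N. EE d C q p * v p) = (\<Sum>p=1..K+1. EE d C q p * v p)"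
proof -
  have N: "N = (K + 1) + (N - (K+1))" using assms by simp
  have "(\<Sum>p=1..N. EE d C q p * v p) = (\<Sum>p=1..K+1. EE d C q p * v p) + (\<Sum>p=K+1+1..(K+1)+(N-(K+1)). EE d C q p * v p)"
    by (subst N, rule sum.ub_add_nat) simp
  also have "(\<Sum>p=K+1+1..(K+1)+(N-(K+1)). EE d C q p * v p) = 0"
    by (rule sum.neutral) (use assms in \<open>auto simp: E_far\<close>)
  finally show ?thesis by simp
qed

lemma cop_add: assumes "coprime (Dl::int) X" shows "coprime X (X + Dl)"
proof (cases "X = 0")
  case True thus ?thesis using assms by simp
next
  case False
  have "(X + Dl) mod X = Dl mod X" by simp
  moreover have "coprime X Dl" using assms by (simp add: coprime_commute)
  ultimately show ?thesis using False by (metis coprime_mod_right_iff)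
qed

lemma front:
  fixes d :: nat and C :: gcm and a x :: "nat \<Rightarrow> int" and l :: nat and s :: int
  assumes d1: "1 \<le> d" and ext: "extensible d C" and aseq: "is_a_seq d C a" and hx: "H1 x"
    and ld: "d \<le> l" and lx: "ell x \<le> l"
    and sA: "s * Delta d C = (\<Sum>i=1..ell x. x i * a i)"
  shows "\<exists>b. \<forall>N q. l+1 \<le> N \<longrightarrow> 1 \<le> q \<longrightarrow> q \<le> N-1 \<longrightarrow>
     (\<Sum>p=1..N. ext_mat d C 0 q p * (if p \<le> l-1 then b p else s)) = x q"
proof -
  define E where "E = EE d C"
  define Dl where "Dl = Delta d C"
  define dt where "dt = cdet d C"
  have Dl0: "Dl \<noteq> 0" and dt0: "dt \<noteq> 0" and gcd1: "gcd dt Dl = 1"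
    using ext by (auto simp: extensible_def Dl_def dt_def)
  have l1: "1 \<le> l" using d1 ld by simp
  have TD: "det (MM l (Tm l E)) = Dl" using T_all[OF d1 ld] by (simp add: E_def Dl_def)
  obtain v' where v': "\<forall>q\<in>{1..l}. (\<Sum>p=1..l. Tm l E q p * v' p) = Dl * x q"
    using adj_exists[of l "Tm l E" x] TD by auto
  define \<sigma> where "\<sigma> = v' l"
  define vv where "vv p = (if p \<le> l then v' p else \<sigma>)" for p
  have vv_tail: "vv p = \<sigma>" if "l \<le> p" for p using that by (auto simp: vv_def \<sigma>_def)
  have S0: "(\<Sum>p=1..l. E q p * vv p) = Dl * x q + (if q = l then \<sigma> else 0)" if q: "q \<in> {1..l}" for q
  proof -
    have "(\<Sum>p=1..l. E q p * vv p) = (\<Sum>p=1..l. Tm l E q p * v' p + (if p = l then (if q = l then v' l else 0) else 0))"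
      by (rule sum.cong[OF refl]) (auto simp: Tm_def vv_def algebra_simps)
    also have "\<dots> = Dl * x q + (if q = l then \<sigma> else 0)"
      using v' q l1 by (simp add: sum.distrib \<sigma>_def)
    finally show ?thesis .
  qed
  have S1: "(\<Sum>p=1..L. E q p * vv p) = Dl * x q + (if q = L then \<sigma> else 0)"
    if L: "l \<le> L" and q: "q \<in> {1..L}" for L q
  proof (cases "L = l")
    case True thus ?thesis using S0 q by simp
  next
    case False
    hence L1: "l + 1 \<le> L" using L by simp
    show ?thesis
    proof (cases "q \<le> l")
      case True
      have "(\<Sum>p=1..L. E q p * vv p) = (\<Sum>p=1..l+1. E q p * vv p)"
        unfolding E_def by (rule trunc) (use ld True L1 in auto)
      also have "\<dots> = (\<Sum>p=1..l. E q p * vv p) + E q (l+1) * vv (l+1)"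
        by simp
      also have "E q (l+1) = (if q = l then -1 else 0)"
        using True ld by (auto simp: E_def ext_mat_def)
      finally show ?thesis using S0[of q] True q L1 vv_tail[of "l+1"] by auto
    next
      case False
      have xq: "x q = 0" using x_zero[OF hx] False lx by simp
      show ?thesis
      proof (cases "q = L")
        case True
        have "(\<Sum>p=1..L. E q p * vv p) = 2 * vv q - vv (q-1)"
          unfolding E_def by (rule path_sum_last) (use d1 ld False True in auto)
        thus ?thesis using vv_tail[of q] vv_tail[of "q-1"] False True xq by simp
      next
        case qL: False
        have "(\<Sum>p=1..L. E q p * vv p) = 2 * vv q - vv (q-1) - vv (q+1)"
          unfolding E_def by (rule path_sum) (use d1 ld False qL q in auto)
        thus ?thesis using vv_tail[of q] vv_tail[of "q-1"] vv_tail[of "q+1"] False qL xq by simp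
      qed
    qed
  qed
  define c where "c = \<sigma> - s * Dl"
  define m where "m = nat \<bar>c\<bar> + nat \<bar>dt\<bar> + l + 1"
  define L where "L = d + m"
  define DD where "DD k = dt + int k * Dl" for k
  have m1: "1 \<le> m" and lL: "l + 1 \<le> L" and xL: "ell x \<le> L" using lx by (auto simp: m_def L_def)
  have detL: "det (MM L E) = DD m" using cdet_formula[OF d1, of m C] by (simp add: L_def E_def DD_def dt_def Dl_def)
  have detL1: "det (MM (L-1) E) = DD (m-1)" using cdet_formula[OF d1, of "m-1" C] m1
    by (simp add: L_def E_def DD_def dt_def Dl_def)
  have absD: "\<bar>DD m\<bar> > \<bar>c\<bar>"
  proof -
    have "\<bar>Dl\<bar> \<ge> 1" using Dl0 by simp
    hence "\<bar>int m * Dl\<bar> \<ge> int m"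
      by (simp add: abs_mult) (metis mult.right_neutral mult_left_mono of_nat_0_le_iff)
    moreover have "int m > \<bar>c\<bar> + \<bar>dt\<bar>" by (simp add: m_def)
    ultimately show ?thesis unfolding DD_def by linarith
  qed
  hence DDm0: "DD m \<noteq> 0" by auto
  have cop1: "coprime (DD k) Dl" for k
  proof -
    have "coprime dt Dl" using gcd1 by (simp add: coprime_iff_gcd_eq_1)
    moreover have "(dt + int k * Dl) mod Dl = dt mod Dl" by simp
    ultimately show ?thesis unfolding DD_def using Dl0 by (metis coprime_mod_left_iff)
  qed
  have cop2: "coprime (DD m) (DD (m-1))"
  proof -
    have "DD m = DD (m-1) + Dl" using m1 by (simp add: DD_def algebra_simps of_nat_diff)
    thus ?thesis using cop_add[of Dl "DD (m-1)"] cop1[of "m-1"] by (simp add: coprime_commute)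
  qed
  have Em: "ext_mat d C m = E" by (simp add: E_def ext_mat_def)
  have "cdet (d + m) (ext_mat d C m) \<noteq> 0"
    using detL DDm0 by (simp only: cdet_MM Em L_def) simp
  hence "\<forall>p\<in>{1..d+m}. in_root_lattice (d+m) (ext_mat d C m) (\<lambda>q. - Delta d C * (if q = p then 1 else 0) - a p * (if q = d + m then 1 else 0))"
    using aseq unfolding is_a_seq_def by blast
  hence "\<forall>p\<in>{1..L}. in_root_lattice L E (\<lambda>q. - Dl * (if q = p then 1 else 0) - a p * (if q = L then 1 else 0))"
    by (simp only: Em L_def Dl_def)
  hence "\<forall>p\<in>{1..L}. \<exists>z. \<forall>q\<in>{1..L}. - Dl * (if q = p then 1 else 0) - a p * (if q = L then 1 else 0) = (\<Sum>p'=1..L. E q p' * z p')"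
    by (simp add: in_root_lattice_def)
  then obtain Zf where Zf: "\<forall>p\<in>{1..L}. \<forall>q\<in>{1..L}. - Dl * (if q = p then 1 else 0) - a p * (if q = L then 1 else 0) = (\<Sum>p'=1..L. E q p' * Zf p p')"
    by metis
  define w where "w p' = (\<Sum>i=1..ell x. x i * Zf i p')" for p'
  have W: "(\<Sum>p'=1..L. E q p' * w p') = - Dl * x q - s * Dl * (if q = L then 1 else 0)" if q: "q \<in> {1..L}" for q
  proof -
    have "(\<Sum>p'=1..L. E q p' * w p') = (\<Sum>i=1..ell x. x i * (\<Sum>p'=1..L. E q p' * Zf i p'))"
    proof -
      have "(\<Sum>p'=1..L. E q p' * w p') = (\<Sum>p'=1..L. \<Sum>i=1..ell x. x i * (E q p' * Zf i p'))"
        unfolding w_def sum_distrib_left by (simp add: algebra_simps)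
      also have "\<dots> = (\<Sum>i=1..ell x. \<Sum>p'=1..L. x i * (E q p' * Zf i p'))"
        by (rule sum.swap)
      finally show ?thesis by (simp add: sum_distrib_left)
    qed
    also have "\<dots> = (\<Sum>i=1..ell x. x i * (- Dl * (if q = i then 1 else 0) - a i * (if q = L then 1 else 0)))"
      by (rule sum.cong[OF refl]) (use Zf q xL in auto)
    also have "\<dots> = - Dl * (\<Sum>i=1..ell x. (if q = i then x i else 0)) - (if q = L then 1 else 0) * (\<Sum>i=1..ell x. x i * a i)"
    proof -
      have "(\<Sum>i=1..ell x. x i * (- Dl * (if q = i then 1 else 0) - a i * (if q = L then 1 else 0)))
          = (\<Sum>i=1..ell x. - Dl * (if q = i then x i else 0) - (if q = L then 1 else 0) * (x i * a i))"
        by (rule sum.cong[OF refl]) (simp add: algebra_simps)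
      also have "\<dots> = (\<Sum>i=1..ell x. - Dl * (if q = i then x i else 0)) - (\<Sum>i=1..ell x. (if q = L then 1 else 0) * (x i * a i))"
        by (rule sum_subtractf)
      finally show ?thesis by (simp only: sum_distrib_left[symmetric])
    qed
    also have "(\<Sum>i=1..ell x. (if q = i then x i else 0)) = x q"
      using x_zero[OF hx, of q] q by (auto simp: sum.delta)
    finally show ?thesis using sA by (simp add: Dl_def)
  qed
  have WV: "\<forall>q\<in>{1..L}. (\<Sum>p=1..L. E q p * (w p + vv p)) = (if q = L then c else 0)"
  proof
    fix q assume q: "q \<in> {1..L}"
    have "(\<Sum>p=1..L. E q p * (w p + vv p)) = (\<Sum>p=1..L. E q p * w p) + (\<Sum>p=1..L. E q p * vv p)"
      by (simp add: distrib_left sum.distrib)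
    also have "\<dots> = (- Dl * x q - s * Dl * (if q = L then 1 else 0)) + (Dl * x q + (if q = L then \<sigma> else 0))"
      using W[OF q] S1[of L q] q lL by (simp only:)
    also have "\<dots> = (if q = L then c else 0)" by (cases "q = L") (simp_all add: c_def algebra_simps)
    finally show "(\<Sum>p=1..L. E q p * (w p + vv p)) = (if q = L then c else 0)" .
  qed
  have "DD m * (w L + vv L) = (\<Sum>q=1..L. adj_mat (MM L E) $$ (L-1, q-1) * (if q = L then c else 0))"
    using adj_sol[OF WV, of L] lL detL by simp
  also have "\<dots> = adj_mat (MM L E) $$ (L-1, L-1) * c"
    using lL by (simp add: if_distrib sum.delta cong: if_cong)
  also have "\<dots> = DD (m-1) * c" using adj_diag[of L E] lL detL1 by simp
  finally have "DD m dvd DD (m-1) * c" by (metis dvd_triv_left)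
  hence "DD m dvd c" using cop2 by (simp add: coprime_dvd_mult_right_iff)
  hence c0: "c = 0" using absD by (metis dvd_imp_le_int abs_ge_zero le_less_trans not_less)
  have S2: "\<forall>q\<in>{1..L}. (\<Sum>p=1..L. E q p * vv p) = Dl * (x q + (if q = L then s else 0))"
    using S1 lL c0 by (auto simp: c_def algebra_simps)
  have dv: "Dl dvd vv p" if p: "p \<in> {1..L}" for p
  proof -
    have "DD m * vv p = (\<Sum>q=1..L. adj_mat (MM L E) $$ (p-1, q-1) * (Dl * (x q + (if q = L then s else 0))))"
      using adj_sol[OF S2 p] detL by simp
    also have "Dl dvd \<dots>" by (rule dvd_sum) simp
    finally have "Dl dvd DD m * vv p" .
    thus ?thesis using cop1[of m] by (simp add: coprime_commute coprime_dvd_mult_right_iff)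
  qed
  define b where "b p = vv p div Dl" for p
  have vvb: "vv p = Dl * (if p \<le> l-1 then b p else s)" if "1 \<le> p" for p
  proof (cases "p \<le> l - 1")
    case True
    hence "p \<in> {1..L}" using that lL by auto
    thus ?thesis using dv True by (simp add: b_def)
  next
    case False
    thus ?thesis using vv_tail[of p] c0 by (simp add: c_def)
  qed
  show ?thesis
  proof (intro exI allI impI)
    fix N q assume N: "l + 1 \<le> N" and q1: "1 \<le> q" and qN: "q \<le> N - 1"
    have "Dl * (\<Sum>p=1..N. E q p * (if p \<le> l-1 then b p else s)) = (\<Sum>p=1..N. E q p * vv p)"
      unfolding sum_distrib_left by (rule sum.cong[OF refl]) (simp add: vvb algebra_simps)
    also have "\<dots> = Dl * x q" using S1[of N q] N q1 qN by simp
    finally show "(\<Sum>p=1..N. ext_mat d C 0 q p * (if p \<le> l-1 then b p else s)) = x q"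
      using Dl0 by (simp add: E_def)
  qed
qed

lemma Z_eq_E: "i \<le> d1 + k \<Longrightarrow> Z_mat d1 C1 d2 C2 k i j = EE d1 C1 i j"
  by (auto simp: Z_mat_def ext_mat_def Let_def)

lemma Z_sym:
  assumes "1 \<le> i" "i \<le> n" "1 \<le> j" "j \<le> n" "n = d1 + d2 + k"
  shows "Z_mat d1 C1 d2 C2 k i j = Z_mat d2 C2 d1 C1 k (n+1-i) (n+1-j)"
proof -
  have nn: "d1 + d2 + k = n" "d2 + d1 + k = n" using assms by auto
  have e1: "n+1-(n+1-i) = i" "n+1-(n+1-j) = j" using assms by auto
  have c1: "(n+1-i \<le> d2 \<and> n+1-j \<le> d2) \<longleftrightarrow> (d1+k < i \<and> d1+k < j)" using assms by auto
  have c2: "(d2 + k < n+1-i \<and> d2+k < n+1-j) \<longleftrightarrow> (i \<le> d1 \<and> j \<le> d1)" using assms by auto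
  have c3: "(n+1-i = n+1-j) \<longleftrightarrow> i = j" using assms by auto
  have c4: "(n+1-i+1 = n+1-j \<or> n+1-j+1 = n+1-i) \<longleftrightarrow> (i+1 = j \<or> j+1 = i)" using assms by auto
  show ?thesis
    unfolding Z_mat_def Let_def nn e1 c1 c2 c3 c4 by auto
qed

lemma side:
  assumes fr: "\<forall>N q. l+1 \<le> N \<longrightarrow> 1 \<le> q \<longrightarrow> q \<le> N-1 \<longrightarrow>
     (\<Sum>p=1..N. EE d1 C1 q p * (if p \<le> l-1 then b p else s)) = x q"
    and dl: "d1 \<le> l" and r1: "1 \<le> r" and lr: "l + r \<le> d1 + d2 + k" and dr: "d2 \<le> r"
    and q1: "1 \<le> q" and qn: "q \<le> d1 + d2 + k - r"
  shows "(\<Sum>p=1..d1+d2+k. Z_mat d1 C1 d2 C2 k q p *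
     (if p \<le> l-1 then b p else if d1+d2+k+1-p \<le> r-1 then c (d1+d2+k+1-p) else s)) = x q"
proof -
  define n where "n = d1 + d2 + k"
  define K where "K = n - r"
  let ?z = "\<lambda>p. if p \<le> l-1 then b p else if n+1-p \<le> r-1 then c (n+1-p) else s"
  let ?u = "\<lambda>p. if p \<le> l-1 then b p else s"
  have "(\<Sum>p=1..n. Z_mat d1 C1 d2 C2 k q p * ?z p) = (\<Sum>p=1..n. EE d1 C1 q p * ?z p)"
    by (rule sum.cong[OF refl]) (use qn dr in \<open>simp add: Z_eq_E n_def\<close>)
  also have "\<dots> = (\<Sum>p=1..K+1. EE d1 C1 q p * ?z p)"
    by (rule trunc) (use dl lr qn r1 in \<open>auto simp: K_def n_def\<close>)
  also have "\<dots> = (\<Sum>p=1..K+1. EE d1 C1 q p * ?u p)"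
    by (rule sum.cong[OF refl]) (use lr r1 in \<open>auto simp: K_def n_def\<close>)
  also have "\<dots> = x q"
    using fr[rule_format, of "K+1" q] q1 qn lr by (simp add: K_def n_def)
  finally have res: "(\<Sum>p=1..n. Z_mat d1 C1 d2 C2 k q p * ?z p) = x q" .
  show ?thesis using res[unfolded n_def] .
qed

theorem proposition4p8:
  fixes d1 d2 :: nat and C1 C2 :: gcm and a1 a2 x y :: "nat \<Rightarrow> int"
  assumes X1: "marked_diagram d1 C1" and X2: "marked_diagram d2 C2"
    and ext1: "extensible d1 C1" and ext2: "extensible d2 C2"
    and cop: "gcd (Delta d1 C1) (Delta d2 C2) = 1"
    and a1: "is_a_seq d1 C1 a1" and a2: "is_a_seq d2 C2 a2"
    and hx: "H1 x" and hy: "H1 y"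
    and zero: "boxes d1 C1 a1 d2 C2 a2 x y = 0"
  shows "\<exists>(b::nat \<Rightarrow> int) (c::nat \<Rightarrow> int) (s::int).
     \<forall>k. k \<ge> max (ell x) d1 + max (ell y) d2 - d1 - d2 \<longrightarrow>
       (\<forall>q\<in>{1..d1+d2+k}. gamma_k d1 d2 k x y q =
          (\<Sum>p=1..d1+d2+k. Z_mat d1 C1 d2 C2 k q p *
             (if p \<le> max (ell x) d1 - 1 then b p
              else if d1 + d2 + k + 1 - p \<le> max (ell y) d2 - 1 then c (d1 + d2 + k + 1 - p)
              else s)))"
proof -
  define l where "l = max (ell x) d1"
  define r where "r = max (ell y) d2"
  define A where "A = (\<Sum>i=1..ell x. x i * a1 i)"
  define B where "B = (\<Sum>i=1..ell y. y i * a2 i)"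
  define D1 where "D1 = Delta d1 C1"
  define D2 where "D2 = Delta d2 C2"
  have d1: "1 \<le> d1" and d2: "1 \<le> d2" using X1 X2 by (auto simp: marked_diagram_def)
  have D10: "D1 \<noteq> 0" using ext1 by (simp add: extensible_def D1_def)
  have D20: "D2 \<noteq> 0" using ext2 by (simp add: extensible_def D2_def)
  have AB: "D2 * A = D1 * B" using zero by (simp add: boxes_def A_def B_def D1_def D2_def)
  have "coprime D1 D2" using cop by (simp add: coprime_iff_gcd_eq_1 D1_def D2_def)
  moreover have "D1 dvd D2 * A" using AB by simp
  ultimately have "D1 dvd A" by (simp add: coprime_dvd_mult_right_iff)
  then obtain s where sA: "A = D1 * s" by blast
  have sB: "B = D2 * s" using AB sA D10 by (simp add: algebra_simps)
  obtain b where b: "\<forall>N q. l+1 \<le> N \<longrightarrow> 1 \<le> q \<longrightarrow> q \<le> N-1 \<longrightarrow>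
     (\<Sum>p=1..N. EE d1 C1 q p * (if p \<le> l-1 then b p else s)) = x q"
    using front[OF d1 ext1 a1 hx, of l s] sA by (auto simp: l_def A_def D1_def mult.commute)
  obtain c where c: "\<forall>N q. r+1 \<le> N \<longrightarrow> 1 \<le> q \<longrightarrow> q \<le> N-1 \<longrightarrow>
     (\<Sum>p=1..N. EE d2 C2 q p * (if p \<le> r-1 then c p else s)) = y q"
    using front[OF d2 ext2 a2 hy, of r s] sB by (auto simp: r_def B_def D2_def mult.commute)
  show ?thesis
  proof (intro exI allI impI ballI)
    fix k q
    assume k: "max (ell x) d1 + max (ell y) d2 - d1 - d2 \<le> k" and q: "q \<in> {1..d1+d2+k}"
    define n where "n = d1 + d2 + k"
    have lr: "l + r \<le> n" using k by (simp add: l_def r_def n_def)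
    have dl: "d1 \<le> l" "ell x \<le> l" and dr: "d2 \<le> r" "ell y \<le> r" by (auto simp: l_def r_def)
    let ?z = "\<lambda>p. if p \<le> l-1 then b p else if n+1-p \<le> r-1 then c (n+1-p) else s"
    have goal: "x q + y (n + 1 - q) = (\<Sum>p=1..n. Z_mat d1 C1 d2 C2 k q p * ?z p)"
    proof (cases "q \<le> n - r")
      case True
      have "y (n + 1 - q) = 0" using x_zero[OF hy] True dr lr by simp
      moreover have "(\<Sum>p=1..d1+d2+k. Z_mat d1 C1 d2 C2 k q p *
         (if p \<le> l-1 then b p else if d1+d2+k+1-p \<le> r-1 then c (d1+d2+k+1-p) else s)) = x q"
        by (rule side[OF b dl(1) _ _ dr(1)]) (use d2 dr lr q True in \<open>auto simp: n_def\<close>)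
      ultimately show ?thesis unfolding n_def by simp
    next
      case False
      have xq: "x q = 0" using x_zero[OF hx] False dl lr by simp
      define q' where "q' = n + 1 - q"
      have q'1: "1 \<le> q'" "q' \<le> d2 + d1 + k - l" "q' \<le> n" using q False lr by (auto simp: q'_def n_def)
      let ?z' = "\<lambda>p. if p \<le> r-1 then c p else if d2+d1+k+1-p \<le> l-1 then b (d2+d1+k+1-p) else s"
      have "(\<Sum>p=1..n. Z_mat d1 C1 d2 C2 k q p * ?z p) = (\<Sum>p=1..n. Z_mat d1 C1 d2 C2 k q (n + 1 - p) * ?z (n + 1 - p))"
        using sum.atLeastAtMost_rev[of "\<lambda>p. Z_mat d1 C1 d2 C2 k q p * ?z p" 1 n] by (simp add: add.commute)
      also have "\<dots> = (\<Sum>p=1..d2+d1+k. Z_mat d2 C2 d1 C1 k q' p * ?z' p)"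
      proof (rule sum.cong)
        show "{1..n} = {1..d2+d1+k}" by (simp add: n_def)
      next
        fix p assume p: "p \<in> {1..d2+d1+k}"
        have "Z_mat d1 C1 d2 C2 k q (n + 1 - p) = Z_mat d2 C2 d1 C1 k q' p"
          using Z_sym[of q n "n+1-p" d1 d2 k C1 C2] q p by (auto simp: q'_def n_def)
        moreover have "?z (n + 1 - p) = ?z' p"
        proof -
          have nn: "d2 + d1 + k = n" by (simp add: n_def)
          show ?thesis unfolding nn using p lr nn by auto
        qed
        ultimately show "Z_mat d1 C1 d2 C2 k q (n + 1 - p) * ?z (n + 1 - p) = Z_mat d2 C2 d1 C1 k q' p * ?z' p"
          by simp
      qed
      also have "\<dots> = y q'"
        by (rule side[OF c dr(1) _ _ dl(1)]) (use d1 dl lr q'1 in \<open>auto simp: n_def\<close>)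
      finally show ?thesis using xq by (simp add: q'_def)
    qed
    show "gamma_k d1 d2 k x y q = (\<Sum>p=1..d1+d2+k. Z_mat d1 C1 d2 C2 k q p *
             (if p \<le> max (ell x) d1 - 1 then b p
              else if d1 + d2 + k + 1 - p \<le> max (ell y) d2 - 1 then c (d1 + d2 + k + 1 - p)
              else s))"
      unfolding gamma_k_def using goal[unfolded n_def l_def r_def] by simp
  qed
qed

end
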